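(* The intersection of two Bianchi-convex subsets of $\mathcal{A}_n$ is Bianchi-convex.
   Context: $\mathcal{A}_n$ is the Euclidean space of algebraic curvature tensors on $\mathbb{R}^n$: symmetric bilinear forms on $\Lambda^2\mathbb{R}^n$ satisfying the first Bianchi identity, viewed as self-adjoint endomorphisms of $\Lambda^2\mathbb{R}^n$ (with $e_i\wedge e_j$, $i<j$, orthonormal), scalar product $\mathrm{tr}(R\circ S)$. Supporting submanifold of a closed $C$ at $x_0\in\partial C$: a codimension-one submanifold $N\ni x_0$ such that for some open neighbourhood $U$ of $x_0$, $U\setminus N$ has two components $U_1,U_2$ with $C\cap\overline U\subseteq\overline{U_1}$; $\mathrm{II}^N_S(X,Y)=\langle\nabla_XY,\mathbf n_S\rangle$ with $\mathbf n$ the unit normal pointing away from $C$. $(T_1,\dots,T_n)\in\mathcal{A}_n^n$ satisfies the second Bianchi identity if for some orthonormal basis $(b_i)$ of $\mathbb{R}^n$, $T_i(b_j\wedge b_k)+T_j(b_k\wedge b_i)+T_k(b_i\wedge b_j)=0$ for all $i,j,k$. A closed $\Omega\subseteq\mathcal{A}_n$ is Bianchi-convex if for every $\epsilon>0$ and $R\in\partial\Omega$ there is a supporting submanifold $N$ of $\Omega$ in $R$ such that for all $S\in N$ and all $(T_1,\dots,T_n)\in(T_SN)^n$ satisfying the second Bianchi identity, $\sum_i\mathrm{II}^N_S(T_i,T_i)\le\epsilon\sum_i\|T_i\|^2$. *)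

theory Defs
  imports "HOL-Analysis.Analysis"
begin

text \<open>Algebraic curvature tensors on R^n, n = CARD('n). An element R is stored through its
  components R_abcd = <R(e_a wedge e_b), e_c wedge e_d> as a 4-tensor.\<close>

type_synonym 'n tensor4 = "real^'n^'n^'n^'n"

definition acts :: "'n::finite tensor4 set" where
  "acts = {R. \<forall>a b c d.
      R$a$b$c$d = - (R$b$a$c$d) \<and>
      R$a$b$c$d = - (R$a$b$d$c) \<and>
      R$a$b$c$d = R$c$d$a$b \<and>
      R$a$b$c$d + R$b$c$a$d + R$c$a$b$d = 0}"

text \<open>Scalar product tr(R o S) = sum over a<b, c<d of R_abcd S_abcd, which by the
  antisymmetries equals one quarter of the full component sum.\<close>

definition acinner :: "'n::finite tensor4 \<Rightarrow> 'n tensor4 \<Rightarrow> real" where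
  "acinner R S = (R \<bullet> S) / 4"

definition acnorm2 :: "'n::finite tensor4 \<Rightarrow> real" where
  "acnorm2 R = acinner R R"

text \<open>Multilinear evaluation: tev R x y z w = <R(x wedge y), z wedge w>.\<close>

definition tev :: "'n::finite tensor4 \<Rightarrow> real^'n \<Rightarrow> real^'n \<Rightarrow> real^'n \<Rightarrow> real^'n \<Rightarrow> real" where
  "tev R x y z w = (\<Sum>a\<in>UNIV. \<Sum>b\<in>UNIV. \<Sum>c\<in>UNIV. \<Sum>d\<in>UNIV.
      R$a$b$c$d * x$a * y$b * z$c * w$d)"

definition ddir :: "'a::real_normed_vector \<Rightarrow> ('a \<Rightarrow> real) \<Rightarrow> 'a \<Rightarrow> real" where
  "ddir v f x = deriv (\<lambda>t. f (x + t *\<^sub>R v)) 0"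

fun iter_ddir :: "'a::real_normed_vector list \<Rightarrow> ('a \<Rightarrow> real) \<Rightarrow> 'a \<Rightarrow> real" where
  "iter_ddir [] f = f"
| "iter_ddir (v # vs) f = ddir v (iter_ddir vs f)"

definition smooth_fun_on :: "'a::real_normed_vector set \<Rightarrow> ('a \<Rightarrow> real) \<Rightarrow> bool" where
  "smooth_fun_on V f \<longleftrightarrow>
     (\<forall>vs. continuous_on V (iter_ddir vs f) \<and>
        (\<forall>v. \<forall>x\<in>V. (\<lambda>t. iter_ddir vs f (x + t *\<^sub>R v)) differentiable (at 0)))"

definition hypersurface :: "'n::finite tensor4 set \<Rightarrow> bool" where
  "hypersurface N \<longleftrightarrow> N \<subseteq> acts \<and>
     (\<forall>p\<in>N. \<exists>V f. open V \<and> p \<in> V \<and> smooth_fun_on V f \<and>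
        (\<exists>v\<in>acts. ddir v f p \<noteq> 0) \<and>
        N \<inter> V = {x \<in> acts \<inter> V. f x = 0})"

definition tangent_space :: "'n::finite tensor4 set \<Rightarrow> 'n tensor4 \<Rightarrow> 'n tensor4 set" where
  "tangent_space N S = {v. \<exists>\<gamma> \<delta>. \<delta> > 0 \<and> \<gamma> 0 = S \<and> (\<forall>t. \<bar>t\<bar> < \<delta> \<longrightarrow> \<gamma> t \<in> N) \<and>
      (\<gamma> has_vector_derivative v) (at 0)}"

definition supporting :: "'n::finite tensor4 set \<Rightarrow> 'n tensor4 \<Rightarrow> 'n tensor4 set
    \<Rightarrow> 'n tensor4 set \<Rightarrow> 'n tensor4 set \<Rightarrow> 'n tensor4 set \<Rightarrow> bool" where
  "supporting C x0 N U U1 U2 \<longleftrightarrow>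
     hypersurface N \<and> x0 \<in> N \<and> openin (top_of_set acts) U \<and> x0 \<in> U \<and>
     U1 \<noteq> U2 \<and> components (U - N) = {U1, U2} \<and>
     C \<inter> closure U \<subseteq> closure U1"

definition away_normal :: "'n::finite tensor4 set \<Rightarrow> 'n tensor4 set \<Rightarrow> 'n tensor4
    \<Rightarrow> 'n tensor4 \<Rightarrow> bool" where
  "away_normal N U2 S \<nu> \<longleftrightarrow> \<nu> \<in> acts \<and> acnorm2 \<nu> = 1 \<and>
     (\<forall>v\<in>tangent_space N S. acinner \<nu> v = 0) \<and>
     (\<exists>\<delta>>0. \<forall>t. 0 < t \<and> t < \<delta> \<longrightarrow> S + t *\<^sub>R \<nu> \<in> U2)"

text \<open>Second Bianchi identity for an n-tuple T indexed by 'n, w.r.t. some orthonormal basis b.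
  The identity in Lambda^2 is tested against the basis b_l wedge b_m.\<close>

definition second_bianchi :: "('n::finite \<Rightarrow> 'n tensor4) \<Rightarrow> bool" where
  "second_bianchi T \<longleftrightarrow> (\<exists>b :: 'n \<Rightarrow> real^'n.
     (\<forall>i j. b i \<bullet> b j = (if i = j then 1 else 0)) \<and>
     (\<forall>i j k l m. tev (T i) (b j) (b k) (b l) (b m) + tev (T j) (b k) (b i) (b l) (b m)
                 + tev (T k) (b i) (b j) (b l) (b m) = 0))"

text \<open>Bianchi-convexity. II^N_S(T,T) = <gamma''(0), nu> for any curve gamma in N with
  gamma(0) = S and gamma'(0) = T (independent of gamma).\<close>

definition bianchi_convex :: "'n::finite tensor4 set \<Rightarrow> bool" where
  "bianchi_convex \<Omega> \<longleftrightarrow> \<Omega> \<subseteq> acts \<and> closed \<Omega> \<and>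
     (\<forall>\<epsilon>>0. \<forall>R\<in>(top_of_set acts) frontier_of \<Omega>. \<exists>N U U1 U2.
        supporting \<Omega> R N U U1 U2 \<and>
        (\<forall>S\<in>N. \<exists>\<nu>. away_normal N U2 S \<nu> \<and>
           (\<forall>(\<gamma> :: 'n \<Rightarrow> real \<Rightarrow> 'n tensor4) \<gamma>' acc \<delta>.
              \<delta> > 0 \<and>
              (\<forall>i. \<gamma> i 0 = S \<and>
                   (\<forall>t. \<bar>t\<bar> < \<delta> \<longrightarrow> \<gamma> i t \<in> N \<and>
                        (\<gamma> i has_vector_derivative \<gamma>' i t) (at t)) \<and>
                   (\<gamma>' i has_vector_derivative acc i) (at 0)) \<and>
              second_bianchi (\<lambda>i. \<gamma>' i 0)
              \<longrightarrow> (\<Sum>i\<in>UNIV. acinner (acc i) \<nu>) \<le> \<epsilon> * (\<Sum>i\<in>UNIV. acnorm2 (\<gamma>' i 0)))))"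

end

theory Submission
  imports Defs
begin

lemma supporting_Int1:
  "supporting A R N U U1 U2 \<Longrightarrow> supporting (A \<inter> B) R N U U1 U2"
  unfolding supporting_def by blast

lemma supporting_Int2:
  "supporting B R N U U1 U2 \<Longrightarrow> supporting (A \<inter> B) R N U U1 U2"
  unfolding supporting_def by blast

lemma ex_mono1:
  "\<exists>N U U1 U2. supporting A R N U U1 U2 \<and> P N U2 \<Longrightarrow>
   \<exists>N U U1 U2. supporting (A \<inter> B) R N U U1 U2 \<and> P N U2"
  using supporting_Int1 by meson

lemma ex_mono2:
  "\<exists>N U U1 U2. supporting B R N U U1 U2 \<and> P N U2 \<Longrightarrow>
   \<exists>N U U1 U2. supporting (A \<inter> B) R N U U1 U2 \<and> P N U2"
  using supporting_Int2 by meson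

lemma frontier_of_Int_cases:
  assumes "R \<in> X frontier_of (A \<inter> B)"
  shows "R \<in> X frontier_of A \<or> R \<in> X frontier_of B"
proof -
  have "R \<in> X closure_of A" "R \<in> X closure_of B"
    using assms closure_of_mono[of "A \<inter> B" A X] closure_of_mono[of "A \<inter> B" B X]
    unfolding frontier_of_def by auto
  moreover have "R \<notin> X interior_of A \<inter> X interior_of B"
    using assms unfolding frontier_of_def interior_of_Int by auto
  ultimately show ?thesis unfolding frontier_of_def by auto
qed

lemma bc_main:
  assumes "A \<subseteq> acts \<and> closed A \<and> (\<forall>e::real>0. \<forall>R\<in>X frontier_of A. \<exists>N U U1 U2. supporting A R N U U1 U2 \<and> P e N U2)"
      and "B \<subseteq> acts \<and> closed B \<and> (\<forall>e::real>0. \<forall>R\<in>X frontier_of B. \<exists>N U U1 U2. supporting B R N U U1 U2 \<and> P e N U2)"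
  shows "A \<inter> B \<subseteq> acts \<and> closed (A \<inter> B) \<and> (\<forall>e::real>0. \<forall>R\<in>X frontier_of (A \<inter> B). \<exists>N U U1 U2. supporting (A \<inter> B) R N U U1 U2 \<and> P e N U2)"
proof (intro conjI allI impI ballI)
  show "A \<inter> B \<subseteq> acts" using assms(1) by blast
  show "closed (A \<inter> B)" using assms by (simp add: closed_Int)
next
  fix e :: real and R assume e: "e > 0" and R: "R \<in> X frontier_of (A \<inter> B)"
  from frontier_of_Int_cases[OF R]
  show "\<exists>N U U1 U2. supporting (A \<inter> B) R N U U1 U2 \<and> P e N U2"
  proof
    assume "R \<in> X frontier_of A"
    then have "\<exists>N U U1 U2. supporting A R N U U1 U2 \<and> P e N U2" using assms(1) e by simp
    then show ?thesis by (rule ex_mono1)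
  next
    assume "R \<in> X frontier_of B"
    then have "\<exists>N U U1 U2. supporting B R N U U1 U2 \<and> P e N U2" using assms(2) e by simp
    then show ?thesis by (rule ex_mono2)
  qed
qed

theorem lemma3p5:
  fixes \<Omega>1 \<Omega>2 :: "'n::finite tensor4 set"
  assumes "bianchi_convex \<Omega>1" and "bianchi_convex \<Omega>2"
  shows "bianchi_convex (\<Omega>1 \<inter> \<Omega>2)"
  using assms unfolding bianchi_convex_def by (rule bc_main)

end
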